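(* Let $G=(V,E)$ be a $p$-regular multigraph and define $w_{\max}(G)=\sum_\sigma w(\sigma)$, the sum over even edge colorings $\sigma$ of $G$ (up to renaming of colors) that use exactly $c_{\max}(G)$ colors. Then, as $n\to\infty$ with $G$ fixed, $$\mathbb{E}_{T\sim\mathrm{Wig}(p,n,1)}[m_G(T)]=\Big(1+O_G\big(\tfrac1n\big)\Big)\,w_{\max}(G)\,n^{c_{\max}(G)}.$$
   Context: $\mathrm{Wig}(p,n,1)$ is the law of $W\in\mathrm{Sym}^p(\mathbb{R}^n)$ with $W_{i_1,\dots,i_p}=\frac{1}{\sqrt{p!}}\sum_{\pi\in S_p}G_{i_{\pi(1)},\dots,i_{\pi(p)}}$, $G$ with i.i.d. $\mathcal{N}(0,1)$ entries. Multigraphs may have loops and parallel edges (a loop contributes 2 to the degree); for $i\in[n]^E$, $i(\partial v)$ is the multiset of labels at $v$ (loops twice), and $m_G(T)=\sum_{i\in[n]^E}\prod_vT_{i(\partial v)}$. An edge coloring $\sigma:E\to C$ is even if each multiset occurring among the $\sigma(\partial v)$, $v\in V$, occurs an even number of times; $c_{\max}(G)$ is the largest number of colors used by an even coloring. For an even coloring whose distinct colored neighborhoods are $N_1,\dots,N_m$, $N_i$ occurring $f_i$ times, and with $c_j(N_i)$ the multiplicity of color $j$ in $N_i$, the weight is $w(\sigma)=\prod_{i=1}^m\big[(f_i-1)!!\prod_{j\in C}c_j(N_i)!^{f_i/2}\big]$. *)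

theory Defs
  imports "HOL-Probability.Probability" "HOL-Library.Multiset"
begin

(* A multigraph with vertex set V and edge set E; ends e is the multiset of the
   two endpoints of e (a loop at v is {#v,v#}). *)
definition p_regular_multigraph ::
  "nat \<Rightarrow> 'v set \<Rightarrow> 'e set \<Rightarrow> ('e \<Rightarrow> 'v multiset) \<Rightarrow> bool" where
  "p_regular_multigraph p V E ends \<longleftrightarrow>
     finite V \<and> finite E \<and>
     (\<forall>e\<in>E. size (ends e) = 2 \<and> set_mset (ends e) \<subseteq> V) \<and>
     (\<forall>v\<in>V. (\<Sum>e\<in>E. count (ends e) v) = p)"

(* i(\<partial>v): multiset of labels of the edges at v, loops counted twice *)
definition lab_at :: "('e \<Rightarrow> 'v multiset) \<Rightarrow> 'e set \<Rightarrow> ('e \<Rightarrow> 'a) \<Rightarrow> 'v \<Rightarrow> 'a multiset" where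
  "lab_at ends E i v = (\<Sum>e\<in>E. replicate_mset (count (ends e) v) (i e))"

(* m_G(T) for a symmetric tensor T, given as a function on index lists;
   T_{i(\<partial>v)} is T evaluated at any ordering of the multiset, here the sorted one *)
definition mG :: "'v set \<Rightarrow> 'e set \<Rightarrow> ('e \<Rightarrow> 'v multiset) \<Rightarrow> nat \<Rightarrow> (nat list \<Rightarrow> real) \<Rightarrow> real" where
  "mG V E ends n T = (\<Sum>i\<in>E \<rightarrow>\<^sub>E {..<n}. \<Prod>v\<in>V. T (sorted_list_of_multiset (lab_at ends E i v)))"

definition idx :: "nat \<Rightarrow> nat \<Rightarrow> nat list set" where
  "idx p n = {xs. length xs = p \<and> set xs \<subseteq> {..<n}}"

definition gauss_space :: "nat \<Rightarrow> nat \<Rightarrow> (nat list \<Rightarrow> real) measure" where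
  "gauss_space p n = (\<Pi>\<^sub>M xs\<in>idx p n. density lborel std_normal_density)"

definition wig :: "nat \<Rightarrow> (nat list \<Rightarrow> real) \<Rightarrow> nat list \<Rightarrow> real" where
  "wig p G is = (1 / sqrt (fact p)) *
     (\<Sum>\<pi>\<in>{\<pi>. \<pi> permutes {..<p}}. G (map (\<lambda>k. is ! \<pi> k) [0..<p]))"

definition wig_moment :: "nat \<Rightarrow> nat \<Rightarrow> 'v set \<Rightarrow> 'e set \<Rightarrow> ('e \<Rightarrow> 'v multiset) \<Rightarrow> real" where
  "wig_moment p n V E ends = (\<integral>G. mG V E ends n (wig p G) \<partial>gauss_space p n)"

definition even_coloring :: "'v set \<Rightarrow> 'e set \<Rightarrow> ('e \<Rightarrow> 'v multiset) \<Rightarrow> ('e \<Rightarrow> nat) \<Rightarrow> bool" where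
  "even_coloring V E ends \<sigma> \<longleftrightarrow>
     (\<forall>v\<in>V. even (card {u\<in>V. lab_at ends E \<sigma> u = lab_at ends E \<sigma> v}))"

definition c_max :: "'v set \<Rightarrow> 'e set \<Rightarrow> ('e \<Rightarrow> 'v multiset) \<Rightarrow> nat" where
  "c_max V E ends = Max {card (\<sigma> ` E) | \<sigma>. even_coloring V E ends \<sigma>}"

fun dfact :: "nat \<Rightarrow> nat" where
  "dfact 0 = 1"
| "dfact (Suc 0) = 1"
| "dfact (Suc (Suc n)) = Suc (Suc n) * dfact n"

definition weight :: "'v set \<Rightarrow> 'e set \<Rightarrow> ('e \<Rightarrow> 'v multiset) \<Rightarrow> ('e \<Rightarrow> nat) \<Rightarrow> real" where
  "weight V E ends \<sigma> =
     (\<Prod>N\<in>lab_at ends E \<sigma> ` V.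
        let f = card {v\<in>V. lab_at ends E \<sigma> v = N}
        in real (dfact (f - 1)) * (\<Prod>j\<in>set_mset N. (fact (count N j)) ^ (f div 2)))"

(* Such colourings are the surjections E \<rightarrow> {..<c} modulo
   the free action of S_c, so we sum over surjections and divide by c!. *)
definition w_max :: "'v set \<Rightarrow> 'e set \<Rightarrow> ('e \<Rightarrow> 'v multiset) \<Rightarrow> real" where
  "w_max V E ends =
     (let c = c_max V E ends in
      (\<Sum>\<sigma>\<in>{\<sigma>\<in>E \<rightarrow>\<^sub>E {..<c}. \<sigma> ` E = {..<c} \<and> even_coloring V E ends \<sigma>}.
          weight V E ends \<sigma>) / fact c)"

end

theory Submission
  imports Defs "HOL-Combinatorics.Multiset_Permutations"
begin


lemma lab_at_cong: "(\<And>e. e \<in> E \<Longrightarrow> i e = j e) \<Longrightarrow> lab_at ends E i = lab_at ends E j"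
  unfolding lab_at_def by (intro ext sum.cong) auto

lemma lab_at_comp: "lab_at ends E (g \<circ> i) v = image_mset g (lab_at ends E i v)"
proof (cases "finite E")
  case True
  then show ?thesis unfolding lab_at_def by (induction E rule: finite_induct) auto
qed (simp add: lab_at_def)

lemma set_lab_at: "set_mset (lab_at ends E i v) \<subseteq> i ` E"
proof (cases "finite E")
  case True
  then show ?thesis unfolding lab_at_def by (induction E rule: finite_induct) (auto split: if_splits)
qed (simp add: lab_at_def)

lemma image_mset_inj_lab:
  assumes "inj_on g (i ` E)"
  shows "image_mset g (lab_at ends E i u) = image_mset g (lab_at ends E i v) \<longleftrightarrow>
         lab_at ends E i u = lab_at ends E i v"
proof
  assume "image_mset g (lab_at ends E i u) = image_mset g (lab_at ends E i v)"
  then show "lab_at ends E i u = lab_at ends E i v"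
    by (rule multiset.inj_map_strong[rotated])
       (use assms set_lab_at[of ends E i] in \<open>(simp add: inj_on_def subset_iff; blast)\<close>)
qed simp

lemma count_image_mset_inj_on:
  assumes "inj_on g (set_mset N)" "j \<in># N"
  shows "count (image_mset g N) (g j) = count N j"
proof -
  have "g -` {g j} \<inter> set_mset N = {j}" using assms by (auto simp: inj_on_def)
  then show ?thesis by (simp add: count_image_mset)
qed

lemma even_rename:
  assumes "inj_on g (i ` E)"
  shows "even_coloring V E ends (g \<circ> i) = even_coloring V E ends i"
  unfolding even_coloring_def lab_at_comp image_mset_inj_lab[OF assms] ..

lemma weight_rename:
  assumes "inj_on g (i ` E)"
  shows "weight V E ends (g \<circ> i) = weight V E ends i"
proof -
  let ?l = "lab_at ends E i"
  have inj: "inj_on (image_mset g) (?l ` V)"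
    using image_mset_inj_lab[OF assms, of ends] by (auto simp: inj_on_def)
  have img: "lab_at ends E (g \<circ> i) ` V = image_mset g ` (?l ` V)"
    by (auto simp: lab_at_comp)
  have ginj: "inj_on g (set_mset (?l v))" for v
    using assms set_lab_at[of ends E i v] inj_on_subset by blast
  have pr: "(\<Prod>j\<in>set_mset (image_mset g (?l x)). (fact (count (image_mset g (?l x)) j) :: real) ^ k)
      = (\<Prod>j\<in>set_mset (?l x). fact (count (?l x) j) ^ k)" for x k
    using ginj[of x] by (simp add: prod.reindex count_image_mset_inj_on)
  have cd: "{v \<in> V. lab_at ends E (g \<circ> i) v = image_mset g (?l x)} = {v \<in> V. ?l v = ?l x}" for x
    by (simp add: lab_at_comp image_mset_inj_lab[OF assms])
  show ?thesis
    unfolding weight_def img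
    apply (subst prod.reindex[OF inj])
    apply (intro prod.cong refl)
    apply (erule imageE, hypsubst)
    apply (simp only: Let_def o_apply cd pr)
    done
qed

lemma lab_at_restrict: "lab_at ends E (restrict f E) = lab_at ends E f"
  by (rule lab_at_cong) simp

lemma even_restrict: "even_coloring V E ends (restrict f E) = even_coloring V E ends f"
  unfolding even_coloring_def lab_at_restrict ..

lemma weight_restrict: "weight V E ends (restrict f E) = weight V E ends f"
  unfolding weight_def lab_at_restrict ..

lemma prod_minus_fact: "(\<Prod>j\<in>{..<k}. (k::nat) - j) = fact k"
proof (induction k)
  case (Suc k)
  have "(\<Prod>j\<in>{..<Suc k}. Suc k - j) = (Suc k - 0) * (\<Prod>j\<in>{..<k}. Suc k - Suc j)"
    by (rule prod.lessThan_Suc_shift)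
  also have "\<dots> = Suc k * fact k" using Suc by simp
  finally show ?case by simp
qed simp

lemma card_inj_self:
  assumes "finite C" "card C = k"
  shows "card {g \<in> {..<k} \<rightarrow>\<^sub>E C. inj_on g {..<k}} = fact k"
  using card_inj_on_subset_funcset[of "{..<k}" C "{..<k}"] assms
  by (simp add: prod_minus_fact atLeast0LessThan)

lemma fiber_sum:
  fixes V :: "'v set" and E :: "'e set" and ends :: "'e \<Rightarrow> 'v multiset" and k n :: nat
  assumes finE: "finite E"
  defines "A \<equiv> {\<sigma> \<in> E \<rightarrow>\<^sub>E {..<k}. \<sigma> ` E = {..<k} \<and> even_coloring V E ends \<sigma>}"
      and "B \<equiv> {g \<in> {..<k} \<rightarrow>\<^sub>E {..<n::nat}. inj_on g {..<k}}"
      and "T \<equiv> {i \<in> E \<rightarrow>\<^sub>E {..<n}. even_coloring V E ends i \<and> card (i ` E) = k}"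
  shows "fact k * (\<Sum>i\<in>T. weight V E ends i) = (\<Sum>\<sigma>\<in>A. weight V E ends \<sigma>) * real (card B)"
proof -
  let ?ev = "even_coloring V E ends" and ?wt = "weight V E ends"
  define h where "h = (\<lambda>x::('e \<Rightarrow> nat) \<times> (nat \<Rightarrow> nat). restrict (snd x \<circ> fst x) E)"
  have finA: "finite A" unfolding A_def
    by (rule finite_subset[of _ "E \<rightarrow>\<^sub>E {..<k}"]) (auto intro!: finite_PiE finE)
  have finB: "finite B" unfolding B_def
    by (rule finite_subset[of _ "{..<k} \<rightarrow>\<^sub>E {..<n}"]) (auto intro!: finite_PiE)
  have hwt: "?wt (h x) = ?wt (fst x)" and hev: "?ev (h x) = ?ev (fst x)"
    and himg: "h x ` E = snd x ` {..<k}" if xAB: "x \<in> A \<times> B" for x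
  proof -
    obtain \<sigma> g where x: "x = (\<sigma>, g)" "\<sigma> \<in> A" "g \<in> B" using xAB by auto
    have inj: "inj_on g (\<sigma> ` E)" using x unfolding A_def B_def by auto
    show "?wt (h x) = ?wt (fst x)" using x weight_rename[OF inj, of V ends]
      by (simp add: h_def weight_restrict)
    show "?ev (h x) = ?ev (fst x)" using x even_rename[OF inj, of V ends]
      by (simp add: h_def even_restrict)
    have "h x ` E = g ` (\<sigma> ` E)" by (auto simp: h_def x)
    then show "h x ` E = snd x ` {..<k}" using x unfolding A_def by simp
  qed
  have fib: "card {x \<in> A \<times> B. h x = i} = fact k" if iT: "i \<in> T" for i
  proof -
    define C where "C = {g \<in> {..<k} \<rightarrow>\<^sub>E i ` E. inj_on g {..<k}}"
    have cardC: "card C = fact k" unfolding C_def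
      by (rule card_inj_self) (use iT finE in \<open>auto simp: T_def\<close>)
    have iE: "i ` E \<subseteq> {..<n}" and ci: "card (i ` E) = k" and evi: "?ev i"
      and iext: "i \<in> extensional E"
      using iT by (auto simp: T_def PiE_def)
    have gimg: "g ` {..<k} = i ` E" if "g \<in> C" for g
    proof -
      have "g ` {..<k} \<subseteq> i ` E" using that by (auto simp: C_def)
      moreover have "card (g ` {..<k}) = card (i ` E)"
        using that ci by (simp add: C_def card_image)
      ultimately show ?thesis using finE by (intro card_subset_eq) auto
    qed
    have "bij_betw snd {x \<in> A \<times> B. h x = i} C"
    proof (rule bij_betw_imageI)
      show "inj_on snd {x \<in> A \<times> B. h x = i}"
      proof (rule inj_onI)
        fix x y assume x: "x \<in> {x \<in> A \<times> B. h x = i}" and y: "y \<in> {x \<in> A \<times> B. h x = i}"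
          and eq: "snd x = snd y"
        obtain \<sigma> g where xx: "x = (\<sigma>, g)" by (cases x)
        obtain \<tau> where yy: "y = (\<tau>, g)" using eq xx by (cases y) auto
        have "\<sigma> e = \<tau> e" for e
        proof (cases "e \<in> E")
          case True
          have "g (\<sigma> e) = i e" "g (\<tau> e) = i e"
            using x y True by (auto simp: xx yy h_def dest: fun_cong[where x=e])
          moreover have "inj_on g {..<k}" "\<sigma> e \<in> {..<k}" "\<tau> e \<in> {..<k}"
            using x y True by (auto simp: xx yy A_def B_def)
          ultimately show ?thesis by (auto simp: inj_on_def)
        next
          case False
          then show ?thesis using x y by (auto simp: xx yy A_def PiE_def extensional_def)
        qed
        then show "x = y" using xx yy by auto
      qed
      show "snd ` {x \<in> A \<times> B. h x = i} = C"
      proof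
        show "snd ` {x \<in> A \<times> B. h x = i} \<subseteq> C"
        proof
          fix y assume "y \<in> snd ` {x \<in> A \<times> B. h x = i}"
          then obtain \<sigma> g where a: "(\<sigma>, g) \<in> A \<times> B" "h (\<sigma>, g) = i" "y = g" by auto
          have "g ` {..<k} = i ` E" using himg[OF a(1)] a(2) by simp
          then show "y \<in> C" using a by (auto simp: C_def B_def)
        qed
        show "C \<subseteq> snd ` {x \<in> A \<times> B. h x = i}"
        proof
          fix g assume gC: "g \<in> C"
          have ginj: "inj_on g {..<k}" using gC by (simp add: C_def)
          define \<sigma> where "\<sigma> = restrict (\<lambda>e. the_inv_into {..<k} g (i e)) E"
          have ie: "i e \<in> g ` {..<k}" if "e \<in> E" for e using gimg[OF gC] that by auto
          have s1: "\<sigma> e \<in> {..<k}" if "e \<in> E" for e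
            using the_inv_into_into[OF ginj ie[OF that] subset_refl] that by (simp add: \<sigma>_def)
          have s2: "g (\<sigma> e) = i e" if "e \<in> E" for e
            using f_the_inv_into_f[OF ginj ie[OF that]] that by (simp add: \<sigma>_def)
          have hs: "h (\<sigma>, g) = i"
            using iext s2 by (auto simp: h_def extensional_def)
          have sE: "\<sigma> ` E = {..<k}"
          proof
            show "\<sigma> ` E \<subseteq> {..<k}" using s1 by auto
            show "{..<k} \<subseteq> \<sigma> ` E"
            proof
              fix j assume j: "j \<in> {..<k}"
              then obtain e where e: "e \<in> E" "g j = i e" using gimg[OF gC] by blast
              have "\<sigma> e = j" using e j ginj by (simp add: \<sigma>_def the_inv_into_f_eq)
              then show "j \<in> \<sigma> ` E" using e by blast
            qed
          qed
          have sinj: "inj_on g (\<sigma> ` E)" using sE ginj by simp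
          have evs: "?ev \<sigma>"
            using evi hs even_rename[OF sinj, of V ends] even_restrict[of V E ends "g \<circ> \<sigma>"]
            by (simp add: h_def)
          have "\<sigma> \<in> A" using s1 sE evs by (auto simp: A_def \<sigma>_def)
          moreover have "g \<in> B"
          proof -
            have "g x \<in> {..<n}" if "x \<in> {..<k}" for x
              using gimg[OF gC] that iE by blast
            then show ?thesis using gC by (auto simp: B_def C_def PiE_def)
          qed
          ultimately show "g \<in> snd ` {x \<in> A \<times> B. h x = i}"
            using hs by (intro image_eqI[of _ _ "(\<sigma>, g)"]) auto
        qed
      qed
    qed
    then show ?thesis using cardC by (simp add: bij_betw_same_card)
  qed
  have himgT: "h ` (A \<times> B) = T"
  proof
    show "h ` (A \<times> B) \<subseteq> T"
    proof
      fix y assume "y \<in> h ` (A \<times> B)"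
      then obtain \<sigma> g where a: "\<sigma> \<in> A" "g \<in> B" and yy: "y = h (\<sigma>, g)" by auto
      have "card (g ` {..<k}) = k" using a by (simp add: B_def card_image)
      moreover have "h (\<sigma>, g) \<in> E \<rightarrow>\<^sub>E {..<n}" using a by (auto simp: h_def A_def B_def PiE_def Pi_def)
      ultimately show "y \<in> T" unfolding yy using a hev[of "(\<sigma>, g)"] himg[of "(\<sigma>, g)"]
        by (auto simp: T_def A_def)
    qed
    show "T \<subseteq> h ` (A \<times> B)"
    proof
      fix i assume "i \<in> T"
      then have "card {x \<in> A \<times> B. h x = i} \<noteq> 0" using fib by simp
      then obtain x where "x \<in> A \<times> B" "h x = i" by (metis (mono_tags, lifting) Collect_empty_eq card.empty)
      then show "i \<in> h ` (A \<times> B)" by blast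
    qed
  qed
  have "(\<Sum>\<sigma>\<in>A. ?wt \<sigma>) * real (card B) = (\<Sum>x\<in>A \<times> B. ?wt (fst x))"
    by (simp add: sum.cartesian_product' sum_distrib_left mult.commute)
  also have "\<dots> = (\<Sum>x\<in>A \<times> B. ?wt (h x))" by (intro sum.cong) (auto simp: hwt)
  also have "\<dots> = (\<Sum>i\<in>h ` (A \<times> B). \<Sum>x\<in>{x \<in> A \<times> B. h x = i}. ?wt (h x))"
    by (rule sum.image_gen) (use finA finB in auto)
  also have "\<dots> = (\<Sum>i\<in>T. \<Sum>x\<in>{x \<in> A \<times> B. h x = i}. ?wt i)" unfolding himgT
    by (intro sum.cong) auto
  also have "\<dots> = (\<Sum>i\<in>T. fact k * ?wt i)" by (intro sum.cong) (auto simp: fib)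
  finally show ?thesis by (simp add: sum_distrib_left)
qed

lemma dfact_pos: "dfact m > 0"
  by (induction m rule: dfact.induct) auto

lemma weight_pos: "weight V E ends \<sigma> > 0"
  unfolding weight_def Let_def
  by (intro prod_pos mult_pos_pos) (auto simp: dfact_pos)

lemma ffact_bound:
  fixes x :: real
  assumes "x \<ge> 1" "real c \<le> x"
  shows "0 \<le> (\<Prod>j<c. x - real j) \<and> (\<Prod>j<c. x - real j) \<le> x ^ c \<and>
         x ^ c - (\<Prod>j<c. x - real j) \<le> real c ^ 2 * x ^ c / x"
  using assms(2)
proof (induction c)
  case 0
  then show ?case using assms by simp
next
  case (Suc c)
  let ?Q = "\<Prod>j<c. x - real j"
  have IH: "0 \<le> ?Q" "?Q \<le> x ^ c" "x ^ c - ?Q \<le> real c ^ 2 * x ^ c / x"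
    using Suc by auto
  have xc: "x - real c \<ge> 1" using Suc.prems by simp
  have x0: "x > 0" using assms by simp
  have eq: "(\<Prod>j<Suc c. x - real j) = ?Q * (x - real c)" by simp
  have a: "0 \<le> ?Q * (x - real c)" using IH xc by simp
  have b: "?Q * (x - real c) \<le> x ^ c * x"
    using IH xc by (intro mult_mono) auto
  have "x ^ Suc c - ?Q * (x - real c) = x * (x ^ c - ?Q) + real c * ?Q"
    by (simp add: algebra_simps)
  also have "\<dots> \<le> x * (real c ^ 2 * x ^ c / x) + real c * x ^ c"
    using IH x0 by (intro add_mono mult_left_mono) auto
  also have "\<dots> = (real c ^ 2 + real c) * x ^ c" using x0 by (simp add: algebra_simps)
  also have "\<dots> \<le> real (Suc c) ^ 2 * x ^ c"
    using x0 by (intro mult_right_mono) (auto simp: power2_eq_square algebra_simps)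
  also have "\<dots> = real (Suc c) ^ 2 * x ^ Suc c / x" using x0 by simp
  finally show ?case using a b eq by (simp add: mult.commute)
qed

lemma partB:
  fixes p :: nat and V :: "'v set" and E :: "'e set" and ends :: "'e \<Rightarrow> 'v multiset"
  assumes finE: "finite E"
    and mom: "\<And>n. wig_moment p n V E ends =
       (\<Sum>i\<in>{i\<in>E \<rightarrow>\<^sub>E {..<n}. even_coloring V E ends i}. weight V E ends i)"
  shows "\<exists>K. \<forall>\<^sub>F n in sequentially.
           \<bar>wig_moment p n V E ends - w_max V E ends * real n ^ c_max V E ends\<bar>
             \<le> K / real n * (w_max V E ends * real n ^ c_max V E ends)"
proof (cases "\<exists>\<sigma>. even_coloring V E ends \<sigma>")
  case False
  then have "wig_moment p n V E ends = 0" for n using mom by simp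
  moreover have "w_max V E ends = 0" using False by (simp add: w_max_def Let_def)
  ultimately show ?thesis by (intro exI[of _ 0]) simp
next
  case True
  let ?ev = "even_coloring V E ends" and ?wt = "weight V E ends"
  define CS where "CS = {card (\<sigma> ` E) | \<sigma>. ?ev \<sigma>}"
  define c where "c = c_max V E ends"
  have c_def': "c = Max CS" unfolding c_def c_max_def CS_def ..
  have finCS: "finite CS"
    by (rule finite_subset[of _ "{..card E}"]) (auto simp: CS_def card_image_le finE)
  have neCS: "CS \<noteq> {}" using True by (auto simp: CS_def)
  have cle: "card (\<sigma> ` E) \<le> c" if "?ev \<sigma>" for \<sigma>
    unfolding c_def' using that finCS by (intro Max_ge) (auto simp: CS_def)
  obtain \<sigma>1 where s1: "?ev \<sigma>1" "card (\<sigma>1 ` E) = c"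
    using Max_in[OF finCS neCS] unfolding c_def'[symmetric] by (auto simp: CS_def)
  define A where "A = (\<lambda>k. {\<sigma> \<in> E \<rightarrow>\<^sub>E {..<k}. \<sigma> ` E = {..<k} \<and> ?ev \<sigma>})"
  define S where "S = (\<lambda>k. \<Sum>\<sigma>\<in>A k. ?wt \<sigma>)"
  define w where "w = S c / fact c"
  have w_eq: "w_max V E ends = w" unfolding w_max_def w_def S_def A_def c_def Let_def ..
  have finA: "finite (A k)" for k unfolding A_def
    by (rule finite_subset[of _ "E \<rightarrow>\<^sub>E {..<k}"]) (auto intro!: finite_PiE finE)
  have S_nn: "S k \<ge> 0" for k unfolding S_def by (intro sum_nonneg less_imp_le weight_pos)
  have S_pos: "S c > 0"
  proof -
    obtain \<beta> where \<beta>: "bij_betw \<beta> (\<sigma>1 ` E) {0..<card (\<sigma>1 ` E)}"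
      using ex_bij_betw_finite_nat finE by blast
    define \<sigma>2 where "\<sigma>2 = restrict (\<beta> \<circ> \<sigma>1) E"
    have binj: "inj_on \<beta> (\<sigma>1 ` E)" using \<beta> by (simp add: bij_betw_def)
    have "\<sigma>2 ` E = \<beta> ` (\<sigma>1 ` E)" by (auto simp: \<sigma>2_def)
    also have "\<dots> = {..<c}" using \<beta> s1 by (auto simp: bij_betw_def)
    finally have im: "\<sigma>2 ` E = {..<c}" .
    have "?ev \<sigma>2" using s1 even_rename[OF binj, of V ends] by (simp add: \<sigma>2_def even_restrict)
    then have "\<sigma>2 \<in> A c" using im by (auto simp: A_def \<sigma>2_def)
    then have "?wt \<sigma>2 \<le> S c" unfolding S_def using finA
      by (intro member_le_sum less_imp_le weight_pos) auto
    then show ?thesis using weight_pos[of V E ends \<sigma>2] by simp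
  qed
  have w_pos: "w > 0" using S_pos by (simp add: w_def)
  define Q where "Q = (\<lambda>n k::nat. real (\<Prod>j\<in>{..<k}. n - j))"
  have Fk: "(\<Sum>i\<in>{i \<in> E \<rightarrow>\<^sub>E {..<n}. ?ev i \<and> card (i ` E) = k}. ?wt i) = S k / fact k * Q n k" for n k
  proof -
    have "card {g \<in> {..<k} \<rightarrow>\<^sub>E {..<n}. inj_on g {..<k}} = (\<Prod>j\<in>{..<k}. n - j)"
      using card_inj_on_subset_funcset[of "{..<k}" "{..<n}" "{..<k}"] by (simp add: atLeast0LessThan)
    then show ?thesis
      using fiber_sum[OF finE, of k V ends n] unfolding S_def A_def Q_def
      by (simp add: field_simps)
  qed
  have Fsum: "wig_moment p n V E ends = (\<Sum>k\<in>{..c}. S k / fact k * Q n k)" for n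
  proof -
    let ?X = "{i\<in>E \<rightarrow>\<^sub>E {..<n}. ?ev i}"
    have finX: "finite ?X" by (rule finite_subset[of _ "E \<rightarrow>\<^sub>E {..<n}"]) (auto intro!: finite_PiE finE)
    have "wig_moment p n V E ends = (\<Sum>i\<in>?X. ?wt i)" by (rule mom)
    also have "\<dots> = (\<Sum>k\<in>{..c}. \<Sum>i\<in>{x \<in> ?X. card (x ` E) = k}. ?wt i)"
      by (rule sum.group[symmetric]) (use finX cle in auto)
    also have "\<dots> = (\<Sum>k\<in>{..c}. S k / fact k * Q n k)"
      by (intro sum.cong refl) (simp only: Fk[symmetric] mem_Collect_eq conj_assoc)
    finally show ?thesis .
  qed
  define D where "D = S c / fact c * real c ^ 2 + (\<Sum>k<c. S k / fact k)"
  have bound: "\<bar>wig_moment p n V E ends - w * real n ^ c\<bar> \<le> D * real n ^ c / real n"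
    if n: "n \<ge> c" "n \<ge> 1" for n
  proof -
    have x1: "real n \<ge> 1" using n by simp
    have Qc: "Q n c = (\<Prod>j<c. real n - real j)"
      unfolding Q_def of_nat_prod using n by (intro prod.cong refl) (simp add: of_nat_diff)
    from ffact_bound[OF x1, of c] n
    have fb: "0 \<le> real n ^ c - Q n c" "real n ^ c - Q n c \<le> real c ^ 2 * real n ^ c / real n"
      by (auto simp: Qc)
    have Qk: "0 \<le> Q n k \<and> Q n k \<le> real n ^ c / real n" if "k < c" for k
    proof -
      have "(\<Prod>j\<in>{..<k}. n - j) \<le> (\<Prod>j\<in>{..<k}. n)" by (intro prod_mono) auto
      then have "(\<Prod>j\<in>{..<k}. n - j) \<le> n ^ k" by simp
      then have "Q n k \<le> real n ^ k" unfolding Q_def of_nat_power[symmetric] by (rule of_nat_mono)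
      also have "\<dots> \<le> real n ^ (c - 1)" using that x1 by (intro power_increasing) auto
      also have "\<dots> = real n ^ c / real n" using that x1
        by (simp add: power_diff)
      finally show ?thesis by (simp add: Q_def del: of_nat_prod)
    qed
    have "wig_moment p n V E ends - w * real n ^ c =
          (\<Sum>k<c. S k / fact k * Q n k) - S c / fact c * (real n ^ c - Q n c)"
      unfolding Fsum w_def by (simp add: lessThan_Suc_atMost[symmetric] algebra_simps)
    also have "\<bar>\<dots>\<bar> \<le> (\<Sum>k<c. S k / fact k * Q n k) + S c / fact c * (real n ^ c - Q n c)"
    proof -
      have "0 \<le> (\<Sum>k<c. S k / fact k * Q n k)" using Qk S_nn by (intro sum_nonneg) auto
      moreover have "0 \<le> S c / fact c * (real n ^ c - Q n c)" using fb S_nn by simp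
      ultimately show ?thesis by linarith
    qed
    also have "\<dots> \<le> (\<Sum>k<c. S k / fact k * (real n ^ c / real n)) + S c / fact c * (real c ^ 2 * real n ^ c / real n)"
      using Qk S_nn fb by (intro add_mono sum_mono mult_left_mono) auto
    also have "\<dots> = (\<Sum>k<c. S k / fact k) * (real n ^ c / real n) + S c / fact c * real c ^ 2 * (real n ^ c / real n)"
      by (subst sum_distrib_right[symmetric]) simp
    also have "\<dots> = D * real n ^ c / real n"
      unfolding D_def by (simp add: algebra_simps add_divide_distrib)
    finally show ?thesis .
  qed
  show ?thesis
  proof (intro exI[of _ "D / w"] eventually_sequentiallyI[of "max c 1"])
    fix n assume "max c 1 \<le> n"
    then have n: "n \<ge> c" "n \<ge> 1" by auto
    have "D / w / real n * (w * real n ^ c) = D * real n ^ c / real n" using w_pos by simp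
    then show "\<bar>wig_moment p n V E ends - w_max V E ends * real n ^ c_max V E ends\<bar>
             \<le> D / w / real n * (w_max V E ends * real n ^ c_max V E ends)"
      using bound[OF n] unfolding w_eq c_def[symmetric] by simp
  qed
qed



definition stab :: "nat list \<Rightarrow> nat" where
  "stab L = card {\<pi>. \<pi> permutes {..<length L} \<and> permute_list \<pi> L = L}"

lemma finite_permutes_lt: "finite {\<pi>. \<pi> permutes {..<m::nat} \<and> P \<pi>}"
  by (rule finite_subset[of _ "{\<pi>. \<pi> permutes {..<m}}"]) (auto intro: finite_permutations)

lemma fiber_card:
  assumes "xs \<in> permutations_of_multiset (mset L)"
  shows "card {\<pi>. \<pi> permutes {..<length L} \<and> permute_list \<pi> L = xs} = stab L"
proof -
  have "mset xs = mset L" using assms by (simp add: permutations_of_multisetD)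
  then obtain \<tau> where \<tau>: "\<tau> permutes {..<length L}" "permute_list \<tau> L = xs"
    by (rule mset_eq_permutation)
  have lenxs: "length xs = length L" using \<tau> by auto
  let ?F = "{\<pi>. \<pi> permutes {..<length L} \<and> permute_list \<pi> L = xs}"
  let ?S = "{\<pi>. \<pi> permutes {..<length L} \<and> permute_list \<pi> L = L}"
  have "bij_betw (\<lambda>\<rho>. \<rho> \<circ> \<tau>) ?S ?F"
  proof (rule bij_betw_byWitness[where f' = "\<lambda>\<pi>. \<pi> \<circ> inv \<tau>"])
    show "\<forall>a\<in>?S. a \<circ> \<tau> \<circ> inv \<tau> = a"
      using \<tau>(1) by (auto simp: comp_assoc permutes_inv_o)
    show "\<forall>a\<in>?F. a \<circ> inv \<tau> \<circ> \<tau> = a"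
      using \<tau>(1) by (auto simp: comp_assoc permutes_inv_o)
    show "(\<lambda>\<rho>. \<rho> \<circ> \<tau>) ` ?S \<subseteq> ?F"
    proof
      fix y assume "y \<in> (\<lambda>\<rho>. \<rho> \<circ> \<tau>) ` ?S"
      then obtain \<rho> where r: "\<rho> permutes {..<length L}" "permute_list \<rho> L = L" and yy: "y = \<rho> \<circ> \<tau>" by auto
      have "permute_list (\<rho> \<circ> \<tau>) L = permute_list \<tau> (permute_list \<rho> L)"
        using \<tau>(1) by (rule permute_list_compose)
      then show "y \<in> ?F"
        using r \<tau> by (simp add: permutes_compose yy)
    qed
    show "(\<lambda>\<pi>. \<pi> \<circ> inv \<tau>) ` ?F \<subseteq> ?S"
    proof
      fix y assume "y \<in> (\<lambda>\<pi>. \<pi> \<circ> inv \<tau>) ` ?F"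
      then obtain \<pi> where r: "\<pi> permutes {..<length L}" "permute_list \<pi> L = xs" and yy: "y = \<pi> \<circ> inv \<tau>" by auto
      have it: "inv \<tau> permutes {..<length L}" using \<tau>(1) by (rule permutes_inv)
      have "permute_list (\<pi> \<circ> inv \<tau>) L = permute_list (inv \<tau>) xs"
        using permute_list_compose[OF it, of \<pi>] r by simp
      also have "\<dots> = permute_list (inv \<tau>) (permute_list \<tau> L)" using \<tau> by simp
      also have "\<dots> = permute_list (\<tau> \<circ> inv \<tau>) L"
        using permute_list_compose[OF it, of \<tau>] by simp
      also have "\<dots> = L" using \<tau>(1) by (simp add: permutes_inv_o)
      finally show "y \<in> ?S"
        using r it by (simp add: permutes_compose yy)
    qed
  qed
  then show ?thesis unfolding stab_def by (simp add: bij_betw_same_card)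
qed

lemma permute_list_in_perms:
  "\<pi> permutes {..<length L} \<Longrightarrow> permute_list \<pi> L \<in> permutations_of_multiset (mset L)"
  by (simp add: permutations_of_multisetI)

lemma image_permute_list:
  "(\<lambda>\<pi>. permute_list \<pi> L) ` {\<pi>. \<pi> permutes {..<length L}} = permutations_of_multiset (mset L)"
proof
  show "(\<lambda>\<pi>. permute_list \<pi> L) ` {\<pi>. \<pi> permutes {..<length L}} \<subseteq> permutations_of_multiset (mset L)"
    using permute_list_in_perms by blast
  show "permutations_of_multiset (mset L) \<subseteq> (\<lambda>\<pi>. permute_list \<pi> L) ` {\<pi>. \<pi> permutes {..<length L}}"
  proof
    fix xs assume "xs \<in> permutations_of_multiset (mset L)"
    then have "mset xs = mset L" by (simp add: permutations_of_multisetD)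
    then obtain \<tau> where "\<tau> permutes {..<length L}" "permute_list \<tau> L = xs"
      by (rule mset_eq_permutation)
    then show "xs \<in> (\<lambda>\<pi>. permute_list \<pi> L) ` {\<pi>. \<pi> permutes {..<length L}}" by blast
  qed
qed

lemma stab_card: "stab L * card (permutations_of_multiset (mset L)) = fact (length L)"
proof -
  let ?P = "{\<pi>. \<pi> permutes {..<length L}}"
  have "fact (length L) = card ?P" by (simp add: card_permutations)
  also have "\<dots> = (\<Sum>\<pi>\<in>?P. 1)" by simp
  also have "\<dots> = (\<Sum>xs\<in>(\<lambda>\<pi>. permute_list \<pi> L) ` ?P. \<Sum>\<pi>\<in>{\<pi>\<in>?P. permute_list \<pi> L = xs}. 1)"
    by (rule sum.image_gen) (simp add: finite_permutations)
  also have "\<dots> = (\<Sum>xs\<in>(\<lambda>\<pi>. permute_list \<pi> L) ` ?P. card {\<pi>\<in>?P. permute_list \<pi> L = xs})"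
    by simp
  also have "\<dots> = (\<Sum>xs\<in>permutations_of_multiset (mset L). stab L)"
    unfolding image_permute_list by (intro sum.cong refl) (simp add: fiber_card)
  finally show ?thesis by simp
qed

lemma stab_eq: "stab L = (\<Prod>x\<in>set_mset (mset L). fact (count (mset L) x))"
proof -
  have a: "card (permutations_of_multiset (mset L)) * (\<Prod>x\<in>set_mset (mset L). fact (count (mset L) x)) = fact (length L)"
    using card_permutations_of_multiset_aux[of "mset L"] by simp
  have "card (permutations_of_multiset (mset L)) > 0"
    by (simp add: card_gt_0_iff)
  then show ?thesis using a stab_card[of L] by (metis mult.commute mult_left_cancel less_irrefl)
qed

lemma wig_eq:
  assumes "length L = p"
  shows "wig p G L = real (stab L) / sqrt (fact p) * (\<Sum>xs\<in>permutations_of_multiset (mset L). G xs)"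
proof -
  let ?P = "{\<pi>. \<pi> permutes {..<length L}}"
  have "(\<Sum>\<pi>\<in>{\<pi>. \<pi> permutes {..<p}}. G (map (\<lambda>k. L ! \<pi> k) [0..<p])) = (\<Sum>\<pi>\<in>?P. G (permute_list \<pi> L))"
    using assms by (simp add: permute_list_def)
  also have "\<dots> = (\<Sum>xs\<in>(\<lambda>\<pi>. permute_list \<pi> L) ` ?P. \<Sum>\<pi>\<in>{\<pi>\<in>?P. permute_list \<pi> L = xs}. G (permute_list \<pi> L))"
    by (rule sum.image_gen) (simp add: finite_permutations)
  also have "\<dots> = (\<Sum>xs\<in>permutations_of_multiset (mset L). real (stab L) * G xs)"
    unfolding image_permute_list
  proof (intro sum.cong refl)
    fix xs assume xs: "xs \<in> permutations_of_multiset (mset L)"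
    have "(\<Sum>\<pi>\<in>{\<pi>\<in>?P. permute_list \<pi> L = xs}. G (permute_list \<pi> L)) = (\<Sum>\<pi>\<in>{\<pi>\<in>?P. permute_list \<pi> L = xs}. G xs)"
      by (intro sum.cong) auto
    also have "\<dots> = real (card {\<pi>\<in>?P. permute_list \<pi> L = xs}) * G xs" by simp
    also have "\<dots> = real (stab L) * G xs" using fiber_card[OF xs] by simp
    finally show "(\<Sum>\<pi>\<in>{\<pi>\<in>?P. permute_list \<pi> L = xs}. G (permute_list \<pi> L)) = real (stab L) * G xs" .
  qed
  finally show ?thesis unfolding wig_def by (simp add: sum_distrib_left)
qed

lemma gs_prob: "prob_space (gauss_space p n)"
  unfolding gauss_space_def by (intro prob_space_PiM prob_space_normal_density) simp

lemma coord_distr_eq: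
  assumes "xs \<in> idx p n"
  shows "distr (gauss_space p n) borel (\<lambda>\<omega>. \<omega> xs) = density lborel std_normal_density"
proof -
  have "distr (gauss_space p n) borel (\<lambda>\<omega>. \<omega> xs) =
        distr (gauss_space p n) (density lborel std_normal_density) (\<lambda>\<omega>. \<omega> xs)"
    by (intro distr_cong) auto
  also have "\<dots> = density lborel std_normal_density"
    unfolding gauss_space_def
    by (rule distr_PiM_component) (auto intro: prob_space_normal_density assms)
  finally show ?thesis .
qed

lemma coord_distributed:
  assumes "xs \<in> idx p n"
  shows "distributed (gauss_space p n) lborel (\<lambda>\<omega>. \<omega> xs) (normal_density 0 1)"
  unfolding distributed_def
proof (intro conjI)
  show "distr (gauss_space p n) lborel (\<lambda>\<omega>. \<omega> xs) = density lborel (normal_density 0 1)"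
    using coord_distr_eq[OF assms] by (metis distr_cong sets_lborel)
  show "(\<lambda>\<omega>. \<omega> xs) \<in> measurable (gauss_space p n) lborel"
    unfolding gauss_space_def using assms by (simp add: measurable_component_singleton cong: measurable_cong_sets)
qed simp

lemma coords_indep: "prob_space.indep_vars (gauss_space p n) (\<lambda>_. borel) (\<lambda>xs \<omega>. \<omega> xs) (idx p n)"
proof -
  interpret prob_space "gauss_space p n" by (rule gs_prob)
  let ?I = "idx p n"
  show ?thesis
  proof (cases "?I = {}")
    case True
    then show ?thesis by (simp add: indep_vars_def indep_sets_def)
  next
    case False
    have rv: "random_variable borel (\<lambda>\<omega>. \<omega> xs)" if "xs \<in> ?I" for xs
      unfolding gauss_space_def using that by (simp add: measurable_component_singleton cong: measurable_cong_sets)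
    have "distr (gauss_space p n) (\<Pi>\<^sub>M i\<in>?I. borel) (\<lambda>x. \<lambda>i\<in>?I. x i) =
          distr (gauss_space p n) (\<Pi>\<^sub>M i\<in>?I. borel) (\<lambda>x. x)"
      by (intro distr_cong refl) (auto simp: gauss_space_def space_PiM PiE_def extensional_restrict)
    also have "\<dots> = gauss_space p n"
      unfolding gauss_space_def by (intro distr_id2 sets_PiM_cong) auto
    also have "\<dots> = (\<Pi>\<^sub>M i\<in>?I. distr (gauss_space p n) borel (\<lambda>x. x i))"
      unfolding gauss_space_def[of p n, symmetric]
      by (subst gauss_space_def) (intro PiM_cong refl coord_distr_eq[symmetric])
    finally show ?thesis
      using indep_vars_iff_distr_eq_PiM'[OF False rv] by simp
  qed
qed

lemma perms_sub:
  assumes "length L = p" "set L \<subseteq> {..<n}"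
  shows "permutations_of_multiset (mset L) \<subseteq> idx p n"
proof
  fix xs assume "xs \<in> permutations_of_multiset (mset L)"
  then have m: "mset xs = mset L" by (rule permutations_of_multisetD)
  then have "length xs = length L" by (metis size_mset)
  moreover have "set xs = set L" using m by (metis set_mset_mset)
  ultimately show "xs \<in> idx p n" using assms by (simp add: idx_def)
qed

lemma sum_distributed:
  assumes "length L = p" "set L \<subseteq> {..<n}"
  shows "distributed (gauss_space p n) lborel (\<lambda>\<omega>. \<Sum>xs\<in>permutations_of_multiset (mset L). \<omega> xs)
           (normal_density 0 (sqrt (real (card (permutations_of_multiset (mset L))))))"
proof -
  interpret prob_space "gauss_space p n" by (rule gs_prob)
  let ?P = "permutations_of_multiset (mset L)"
  have sub: "?P \<subseteq> idx p n" by (rule perms_sub[OF assms])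
  have "distributed (gauss_space p n) lborel (\<lambda>\<omega>. \<Sum>xs\<in>?P. \<omega> xs)
          (normal_density (\<Sum>xs\<in>?P. 0) (sqrt (\<Sum>xs\<in>?P. 1\<^sup>2)))"
    by (rule sum_indep_normal[where X="\<lambda>xs \<omega>. \<omega> xs"])
       (use sub in \<open>auto intro: indep_vars_subset[OF coords_indep] coord_distributed\<close>)
  then show ?thesis by simp
qed

lemma dfact_odd: "real (dfact (2*k - 1)) * 2^k * fact k = fact (2*k)"
proof (induction k)
  case (Suc k)
  show ?case
  proof (cases k)
    case 0
    then show ?thesis by (simp add: numeral_2_eq_2)
  next
    case (Suc m)
    have e: "2 * Suc k - 1 = Suc (Suc (2 * k - 1))" using Suc by simp
    have "real (dfact (2 * Suc k - 1)) = real (2 * k + 1) * real (dfact (2 * k - 1))"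
      unfolding e using Suc by (simp add: algebra_simps)
    then have "real (dfact (2 * Suc k - 1)) * 2 ^ Suc k * fact (Suc k) =
               real (2 * k + 1) * (2 * real (k + 1)) * (real (dfact (2 * k - 1)) * 2 ^ k * fact k)"
      by (simp add: algebra_simps)
    also have "\<dots> = real (2 * k + 1) * (2 * real (k + 1)) * fact (2 * k)" using Suc.IH by simp
    also have "\<dots> = fact (2 * Suc k)"
      by (simp add: algebra_simps)
    finally show ?thesis .
  qed
qed simp

definition wmom :: "nat list \<Rightarrow> nat \<Rightarrow> real" where
  "wmom L f = (if even f then real (dfact (f - 1)) * real (stab L) ^ (f div 2) else 0)"

lemma W_moment:
  assumes "length L = p" "set L \<subseteq> {..<n}"
  shows "integrable (gauss_space p n) (\<lambda>\<omega>. (wig p \<omega> L) ^ f)"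
    and "(\<integral>\<omega>. (wig p \<omega> L) ^ f \<partial>gauss_space p n) = wmom L f"
proof -
  let ?P = "permutations_of_multiset (mset L)"
  define a where "a = real (stab L) / sqrt (fact p)"
  define c where "c = real (card ?P)"
  define Y where "Y = (\<lambda>\<omega>::nat list \<Rightarrow> real. \<Sum>xs\<in>?P. \<omega> xs)"
  have wY: "(\<lambda>\<omega>. (wig p \<omega> L) ^ f) = (\<lambda>\<omega>. (a * Y \<omega>) ^ f)"
    using wig_eq[OF assms(1)] by (simp add: a_def Y_def)
  have D: "distributed (gauss_space p n) lborel Y (normal_density 0 (sqrt c))"
    unfolding Y_def c_def by (rule sum_distributed[OF assms])
  have cpos: "c > 0" unfolding c_def by (simp add: card_gt_0_iff)
  then have spos: "sqrt c > 0" by simp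
  have g: "(\<lambda>x. normal_density 0 (sqrt c) x * (a * x) ^ f) = (\<lambda>x. a ^ f * (normal_density 0 (sqrt c) x * (x - 0) ^ f))"
    by (simp add: power_mult_distrib algebra_simps)
  have intL: "integrable lborel (\<lambda>x. normal_density 0 (sqrt c) x * (a * x) ^ f)"
    unfolding g by (intro integrable_mult_right integrable_normal_moment spos)
  show "integrable (gauss_space p n) (\<lambda>\<omega>. (wig p \<omega> L) ^ f)"
    unfolding wY using distributed_integrable[OF D, of "\<lambda>x. (a * x) ^ f"] intL by simp
  have "(\<integral>\<omega>. (wig p \<omega> L) ^ f \<partial>gauss_space p n) = (\<integral>x. normal_density 0 (sqrt c) x * (a * x) ^ f \<partial>lborel)"
    unfolding wY by (rule distributed_integral[OF D, symmetric]) auto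
  also have "\<dots> = a ^ f * (\<integral>x. normal_density 0 (sqrt c) x * (x - 0) ^ f \<partial>lborel)"
    unfolding g by simp
  also have "\<dots> = wmom L f"
  proof (cases "even f")
    case True
    then obtain k where k: "f = 2 * k" by (elim evenE)
    have sc: "real (stab L) * c = fact p"
      using stab_card[of L] assms(1) unfolding c_def by (metis of_nat_fact of_nat_mult)
    have a2: "a ^ 2 * c = real (stab L)"
    proof -
      have "fact p > (0::real)" by simp
      then show ?thesis using sc cpos unfolding a_def
        by (simp add: power_divide field_simps power2_eq_square)
    qed
    have "a ^ f * (\<integral>x. normal_density 0 (sqrt c) x * (x - 0) ^ f \<partial>lborel)
          = a ^ (2 * k) * (fact (2 * k) / ((2 / c) ^ k * fact k))"
      unfolding k using integral_normal_moment_even[OF spos, of 0 k] cpos by simp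
    also have "\<dots> = (a ^ 2 * c) ^ k * fact (2 * k) / (2 ^ k * fact k)"
    proof -
      have "a ^ (2 * k) = (a ^ 2) ^ k" by (rule power_mult)
      moreover have "(2 / c) ^ k = 2 ^ k / c ^ k" by (rule power_divide)
      moreover have "(a ^ 2 * c) ^ k = (a ^ 2) ^ k * c ^ k" by (rule power_mult_distrib)
      ultimately show ?thesis using cpos by (simp add: field_simps)
    qed
    also have "\<dots> = real (stab L) ^ k * (real (dfact (2 * k - 1)) * 2 ^ k * fact k) / (2 ^ k * fact k)"
      unfolding a2 dfact_odd ..
    also have "\<dots> = wmom L f" unfolding wmom_def k by simp
    finally show ?thesis .
  next
    case False
    then obtain k where k: "f = 2 * k + 1" using oddE by blast
    show ?thesis unfolding k using integral_normal_moment_odd[OF spos, of 0 k] False k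
      by (simp add: wmom_def)
  qed
  finally show "(\<integral>\<omega>. (wig p \<omega> L) ^ f \<partial>gauss_space p n) = wmom L f" .
qed

lemma prod_moment:
  assumes finS: "finite S" and SL: "\<And>L. L \<in> S \<Longrightarrow> length L = p \<and> set L \<subseteq> {..<n}"
    and inj: "inj_on mset S"
  shows "integrable (gauss_space p n) (\<lambda>\<omega>. \<Prod>L\<in>S. (wig p \<omega> L) ^ f L)"
    and "(\<integral>\<omega>. (\<Prod>L\<in>S. (wig p \<omega> L) ^ f L) \<partial>gauss_space p n) = (\<Prod>L\<in>S. wmom L (f L))"
proof -
  interpret prob_space "gauss_space p n" by (rule gs_prob)
  define K where "K = (\<lambda>L::nat list. permutations_of_multiset (mset L))"
  define Y where "Y = (\<lambda>L (g::nat list \<Rightarrow> real). (real (stab L) / sqrt (fact p) * (\<Sum>xs\<in>K L. g xs)) ^ f L)"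
  have disj: "disjoint_family_on K S"
    unfolding disjoint_family_on_def
  proof (intro ballI impI)
    fix L L' assume "L \<in> S" "L' \<in> S" "L \<noteq> L'"
    then have "mset L \<noteq> mset L'" using inj by (auto simp: inj_on_def)
    then show "K L \<inter> K L' = {}" unfolding K_def by (metis disjoint_iff permutations_of_multisetD)
  qed
  have Ksub: "K L \<subseteq> idx p n" if "L \<in> S" for L
    unfolding K_def using SL[OF that] by (intro perms_sub) auto
  have i1: "indep_vars (\<lambda>L. Pi\<^sub>M (K L) (\<lambda>_. borel)) (\<lambda>L \<omega>. restrict (\<lambda>i. \<omega> i) (K L)) S"
    by (rule indep_vars_restrict[OF coords_indep Ksub disj])
  have i2: "indep_vars (\<lambda>_. borel) (\<lambda>L \<omega>. Y L (restrict (\<lambda>i. \<omega> i) (K L))) S"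
  proof (rule indep_vars_compose2[OF i1])
    fix L assume "L \<in> S"
    have fin: "finite (K L)" by (simp add: K_def)
    show "Y L \<in> measurable (Pi\<^sub>M (K L) (\<lambda>_. borel)) borel"
      unfolding Y_def by measurable
  qed
  have eqY: "(\<lambda>\<omega>. Y L (restrict (\<lambda>i. \<omega> i) (K L))) = (\<lambda>\<omega>. (wig p \<omega> L) ^ f L)" if "L \<in> S" for L
    using wig_eq[of L p] SL[OF that] by (simp add: Y_def K_def)
  have ind: "indep_vars (\<lambda>_. borel) (\<lambda>L \<omega>. (wig p \<omega> L) ^ f L) S"
    using i2 by (subst (asm) indep_vars_cong[OF refl eqY refl]) auto
  have intg: "integrable (gauss_space p n) (\<lambda>\<omega>. (wig p \<omega> L) ^ f L)" if "L \<in> S" for L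
    using W_moment(1)[of L p n] SL[OF that] by auto
  show "integrable (gauss_space p n) (\<lambda>\<omega>. \<Prod>L\<in>S. (wig p \<omega> L) ^ f L)"
    by (rule indep_vars_integrable[OF finS ind intg])
  have "(\<integral>\<omega>. (\<Prod>L\<in>S. (wig p \<omega> L) ^ f L) \<partial>gauss_space p n) =
        (\<Prod>L\<in>S. \<integral>\<omega>. (wig p \<omega> L) ^ f L \<partial>gauss_space p n)"
    by (rule indep_vars_lebesgue_integral[OF finS ind intg])
  also have "\<dots> = (\<Prod>L\<in>S. wmom L (f L))"
    using W_moment(2) SL by (intro prod.cong) auto
  finally show "(\<integral>\<omega>. (\<Prod>L\<in>S. (wig p \<omega> L) ^ f L) \<partial>gauss_space p n) = (\<Prod>L\<in>S. wmom L (f L))" .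
qed

lemma size_lab_at: "finite E \<Longrightarrow> size (lab_at ends E i v) = (\<Sum>e\<in>E. count (ends e) v)"
  unfolding lab_at_def by (induction E rule: finite_induct) auto

lemma sl_inj: "sorted_list_of_multiset M = sorted_list_of_multiset N \<longleftrightarrow> M = N"
  by (metis mset_sorted_list_of_multiset)

lemma term_moment:
  assumes reg: "p_regular_multigraph p V E ends" and iF: "i \<in> E \<rightarrow>\<^sub>E {..<n}"
  shows "integrable (gauss_space p n) (\<lambda>G. \<Prod>v\<in>V. wig p G (sorted_list_of_multiset (lab_at ends E i v)))"
    and "(\<integral>G. (\<Prod>v\<in>V. wig p G (sorted_list_of_multiset (lab_at ends E i v))) \<partial>gauss_space p n)
         = (if even_coloring V E ends i then weight V E ends i else 0)"
proof -
  have finV: "finite V" and finE: "finite E" and deg: "\<And>v. v \<in> V \<Longrightarrow> (\<Sum>e\<in>E. count (ends e) v) = p"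
    using reg by (auto simp: p_regular_multigraph_def)
  let ?lab = "lab_at ends E i"
  let ?sl = "sorted_list_of_multiset :: nat multiset \<Rightarrow> nat list"
  define Lv where "Lv = (\<lambda>v. ?sl (?lab v))"
  define S where "S = Lv ` V"
  define f where "f = (\<lambda>L. card {v \<in> V. Lv v = L})"
  have finS: "finite S" using finV by (simp add: S_def)
  have SL: "length L = p \<and> set L \<subseteq> {..<n}" if LS: "L \<in> S" for L
  proof -
    obtain v where v: "v \<in> V" "L = Lv v" using LS by (auto simp: S_def)
    have "length L = size (?lab v)" using v by (simp add: Lv_def flip: size_mset)
    also have "\<dots> = p" using v by (simp add: size_lab_at[OF finE] deg)
    finally have "length L = p" .
    moreover have "set L = set_mset (?lab v)" using v by (simp add: Lv_def flip: set_mset_mset)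
    then have "set L \<subseteq> {..<n}" using set_lab_at[of ends E i v] iF by (auto simp: PiE_def Pi_def)
    ultimately show ?thesis by simp
  qed
  have injS: "inj_on mset S" unfolding S_def Lv_def by (auto simp: inj_on_def)
  have eqprod: "(\<lambda>G. \<Prod>v\<in>V. wig p G (Lv v)) = (\<lambda>G. \<Prod>L\<in>S. (wig p G L) ^ f L)"
  proof
    fix G
    have "(\<Prod>v\<in>V. wig p G (Lv v)) = (\<Prod>L\<in>Lv ` V. \<Prod>v\<in>{x \<in> V. Lv x = L}. wig p G (Lv v))"
      by (rule prod.image_gen[OF finV])
    also have "\<dots> = (\<Prod>L\<in>S. (wig p G L) ^ f L)"
      unfolding S_def f_def by (intro prod.cong refl) simp
    finally show "(\<Prod>v\<in>V. wig p G (Lv v)) = (\<Prod>L\<in>S. (wig p G L) ^ f L)" .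
  qed
  show "integrable (gauss_space p n) (\<lambda>G. \<Prod>v\<in>V. wig p G (sorted_list_of_multiset (lab_at ends E i v)))"
    using prod_moment(1)[OF finS SL injS, of f] eqprod unfolding Lv_def by simp
  have "(\<integral>G. (\<Prod>v\<in>V. wig p G (sorted_list_of_multiset (lab_at ends E i v))) \<partial>gauss_space p n)
        = (\<Prod>L\<in>S. wmom L (f L))"
    using prod_moment(2)[OF finS SL injS, of f] eqprod unfolding Lv_def by simp
  also have "\<dots> = (\<Prod>N\<in>?lab ` V. wmom (?sl N) (card {v \<in> V. ?lab v = N}))"
  proof -
    have "S = ?sl ` (?lab ` V)" by (auto simp: S_def Lv_def)
    moreover have "inj_on ?sl (?lab ` V)" by (auto simp: inj_on_def sl_inj)
    ultimately show ?thesis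
      by (simp add: prod.reindex f_def Lv_def sl_inj)
  qed
  also have "\<dots> = (if even_coloring V E ends i then weight V E ends i else 0)"
  proof (cases "even_coloring V E ends i")
    case True
    have "(\<Prod>N\<in>?lab ` V. wmom (?sl N) (card {v \<in> V. ?lab v = N})) = weight V E ends i"
      unfolding weight_def Let_def
    proof (intro prod.cong refl)
      fix N assume "N \<in> ?lab ` V"
      then obtain v where v: "v \<in> V" "N = ?lab v" by auto
      have "even (card {u \<in> V. ?lab u = ?lab v})"
        using True v unfolding even_coloring_def by blast
      then have ev: "even (card {u \<in> V. ?lab u = N})" using v by simp
      have st: "real (stab (?sl N)) = (\<Prod>j\<in>set_mset N. fact (count N j))"
        by (simp add: stab_eq of_nat_prod)
      show "wmom (?sl N) (card {v \<in> V. ?lab v = N}) =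
            real (dfact (card {v \<in> V. ?lab v = N} - 1)) *
            (\<Prod>j\<in>set_mset N. fact (count N j) ^ (card {v \<in> V. ?lab v = N} div 2))"
        using ev unfolding wmom_def st by (simp add: prod_power_distrib)
    qed
    then show ?thesis using True by simp
  next
    case False
    then obtain v where v: "v \<in> V" "odd (card {u \<in> V. ?lab u = ?lab v})"
      unfolding even_coloring_def by auto
    have "wmom (?sl (?lab v)) (card {u \<in> V. ?lab u = ?lab v}) = 0"
      using v by (simp add: wmom_def)
    then have "(\<Prod>N\<in>?lab ` V. wmom (?sl N) (card {v \<in> V. ?lab v = N})) = 0"
      using finV v by (intro prod_zero) auto
    then show ?thesis using False by simp
  qed
  finally show "(\<integral>G. (\<Prod>v\<in>V. wig p G (sorted_list_of_multiset (lab_at ends E i v))) \<partial>gauss_space p n)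
         = (if even_coloring V E ends i then weight V E ends i else 0)" .
qed

lemma partA:
  assumes reg: "p_regular_multigraph p V E ends"
  shows "wig_moment p n V E ends =
       (\<Sum>i\<in>{i\<in>E \<rightarrow>\<^sub>E {..<n}. even_coloring V E ends i}. weight V E ends i)"
proof -
  have finE: "finite E" using reg by (simp add: p_regular_multigraph_def)
  have finF: "finite (E \<rightarrow>\<^sub>E {..<n})" using finE by (intro finite_PiE) auto
  have "wig_moment p n V E ends = (\<Sum>i\<in>E \<rightarrow>\<^sub>E {..<n}.
          \<integral>G. (\<Prod>v\<in>V. wig p G (sorted_list_of_multiset (lab_at ends E i v))) \<partial>gauss_space p n)"
    unfolding wig_moment_def mG_def
    using term_moment(1)[OF reg] by (subst Bochner_Integration.integral_sum) auto
  also have "\<dots> = (\<Sum>i\<in>E \<rightarrow>\<^sub>E {..<n}. if even_coloring V E ends i then weight V E ends i else 0)"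
    by (intro sum.cong refl term_moment(2)[OF reg])
  also have "\<dots> = (\<Sum>i\<in>{i\<in>E \<rightarrow>\<^sub>E {..<n}. even_coloring V E ends i}. weight V E ends i)"
    by (rule sum.inter_filter[OF finF, symmetric])
  finally show ?thesis .
qed


theorem proposition5p2:
  fixes p :: nat and V :: "'v set" and E :: "'e set" and ends :: "'e \<Rightarrow> 'v multiset"
  assumes "p_regular_multigraph p V E ends"
  shows "\<exists>K. \<forall>\<^sub>F n in sequentially.
           \<bar>wig_moment p n V E ends - w_max V E ends * real n ^ c_max V E ends\<bar>
             \<le> K / real n * (w_max V E ends * real n ^ c_max V E ends)"
proof -
  have finE: "finite E" using assms by (simp add: p_regular_multigraph_def)
  show ?thesis by (rule partB[OF finE partA[OF assms]])
qed

end
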